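(* Let $Z$ be a finite set with an abelian groupoid $\bigoplus_{\lambda\in\Lambda}G_\lambda$, let $X$ be a finite set, and let $\bar M: X\to Z$ be a $Z$-valued demolition measurement on $X$ (for this groupoid). For $\lambda\in\Lambda$ let $\bar M_\lambda := \rho_{G_\lambda}^\dagger\circ\bar M : X\to 1$. Then there exist an abelian groupoid $\bigoplus_{\gamma\in\Gamma} H_\gamma$ on $X$ and a function $f:\Gamma\to\Lambda$ such that for every $\lambda\in\Lambda$ $$\bar M_\lambda = \bigcup_{\gamma\in\Gamma,\ f(\gamma)=\lambda} D_\gamma,$$ where $D_\gamma := \rho_{H_\gamma}^\dagger\circ\mathrm{dec}_X : X\to 1$ and $\mathrm{dec}_X$ is the decoherence map of the groupoid $\bigoplus_\gamma H_\gamma$ on $X$.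
   Context: $\mathbf{fRel}$: finite sets and relations, relational composition, tensor the cartesian product with unit $1=\{\star\}$, dagger the converse relation. For a relation $g\subseteq X\times Y$, its pure CPM map is $\hat g = \{((x,x'),(y,y')) : (x,y)\in g,\ (x',y')\in g\}\subseteq (X\times X)\times(Y\times Y)$. A CPM map $X\to Y$ is a relation $R\subseteq (X\times X)\times(Y\times Y)$ of the form $\{((x,x'),(y,y')):\exists e\in E,\ (x,(e,y))\in h,\ (x',(e,y'))\in h\}$ for some finite $E$ and $h\subseteq X\times(E\times Y)$; CPM maps compose relationally, $\mathrm{id}_X=\widehat{\mathrm{id}_X}$, the dagger is the converse relation, and the tensor of $R:X\to Y$ and $S:U\to V$ is $\{(((x,u),(x',u')),((y,v),(y',v'))) : ((x,x'),(y,y'))\in R,\ ((u,u'),(v,v'))\in S\}$. The discarding map is $\cap_X = \{((x,x),\star): x\in X\}: X\to 1$; a CPM map $R:X\to Y$ is causal if $\cap_Y\circ R=\cap_X$. An abelian groupoid on a finite set $Z$ is a family of abelian groups $(G_\lambda,+,0_\lambda)_{\lambda\in\Lambda}$ with pairwise disjoint underlying sets covering $Z$. For it: comultiplication $\delta=\{(g,(g',g'')): g,g',g''\in G_\lambda\text{ for some }\lambda,\ g'+g''=g\}\subseteq Z\times(Z\times Z)$; pairing $e=\{((g,h),\star): g,h\in G_\lambda\text{ for some }\lambda,\ g+h=0_\lambda\}\subseteq (Z\times Z)\times 1$; decoherence map $\mathrm{dec}_Z=\{((x,x'),(y,y')) : \exists\lambda,\ x,x',y,y'\in G_\lambda,\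 x-y=x'-y'\}: Z\to Z$; and $\rho_{G_\lambda}=G_\lambda\times G_\lambda$, viewed as the pure CPM state $1\to Z$, with $\rho_{G_\lambda}^\dagger=\{((g,g'),\star):g,g'\in G_\lambda\}:Z\to 1$. A $Z$-valued non-demolition measurement on $X$ is a causal CPM map $M: X\to X\times Z$ of the form $M=(\mathrm{id}_X\times\mathrm{dec}_Z)\circ\hat P$ for some relation $P\subseteq X\times(X\times Z)$, satisfying (idempotence) $(M\times\mathrm{id}_Z)\circ M = (\mathrm{id}_X\times\hat\delta)\circ M$ as CPM maps $X\to X\times Z\times Z$ (on the left, the $Z$-output of the first application of $M$ is the last factor), and (self-adjointness) $(\mathrm{id}_X\times\hat e)\circ(M\times\mathrm{id}_Z) = \widehat{P^\dagger}\circ(\mathrm{id}_X\times\mathrm{dec}_Z)$ as CPM maps $X\times Z\to X$. A $Z$-valued demolition measurement on $X$ is a CPM map of the form $\bar M=(\cap_X\times\mathrm{id}_Z)\circ M: X\to Z$ for such an $M$. *)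

theory Defs
  imports "HOL-Algebra.Group"
begin

text \<open>Objects are finite carrier sets (subsets of a type); morphisms are relations
 (sets of pairs). The unit object 1 is the type unit. Relational composition
 "S after R" is written  R O S  (first R, then S). A CPM map X to Y is a relation
 between X x X and Y x Y.\<close>

definition cpm_hat :: "('a \<times> 'b) set \<Rightarrow> (('a \<times> 'a) \<times> ('b \<times> 'b)) set" where
  "cpm_hat g = {((x, x'), (y, y')) | x x' y y'. (x, y) \<in> g \<and> (x', y') \<in> g}"

definition cpm_id :: "'a set \<Rightarrow> (('a \<times> 'a) \<times> ('a \<times> 'a)) set" where
  "cpm_id X = cpm_hat (Id_on X)"

definition cpm_tensor ::
  "(('a \<times> 'a) \<times> ('b \<times> 'b)) set \<Rightarrow> (('c \<times> 'c) \<times> ('d \<times> 'd)) set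
   \<Rightarrow> ((('a \<times> 'c) \<times> ('a \<times> 'c)) \<times> (('b \<times> 'd) \<times> ('b \<times> 'd))) set" where
  "cpm_tensor R S = {(((x, u), (x', u')), ((y, v), (y', v'))) | x x' u u' y y' v v'.
      ((x, x'), (y, y')) \<in> R \<and> ((u, u'), (v, v')) \<in> S}"

text \<open>CPM maps: of the Stinespring-like form for some finite environment E
 (any finite set is in bijection with a finite set of naturals).\<close>
definition is_cpm :: "'a set \<Rightarrow> 'b set \<Rightarrow> (('a \<times> 'a) \<times> ('b \<times> 'b)) set \<Rightarrow> bool" where
  "is_cpm X Y R \<longleftrightarrow> (\<exists>(E :: nat set) h. finite E \<and> h \<subseteq> X \<times> (E \<times> Y) \<and>
     R = {((x, x'), (y, y')) | x x' y y'. \<exists>e\<in>E. (x, (e, y)) \<in> h \<and> (x', (e, y')) \<in> h})"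

definition discard :: "'a set \<Rightarrow> (('a \<times> 'a) \<times> (unit \<times> unit)) set" where
  "discard X = {((x, x), ((), ())) | x. x \<in> X}"

definition causal :: "'a set \<Rightarrow> 'b set \<Rightarrow> (('a \<times> 'a) \<times> ('b \<times> 'b)) set \<Rightarrow> bool" where
  "causal X Y R \<longleftrightarrow> R O discard Y = discard X"

definition assoc_rel :: "'a set \<Rightarrow> 'b set \<Rightarrow> 'c set \<Rightarrow> ((('a \<times> 'b) \<times> 'c) \<times> ('a \<times> ('b \<times> 'c))) set" where
  "assoc_rel A B C = {(((a, b), c), (a, (b, c))) | a b c. a \<in> A \<and> b \<in> B \<and> c \<in> C}"

definition runit_rel :: "'a set \<Rightarrow> (('a \<times> unit) \<times> 'a) set" where
  "runit_rel A = {((a, ()), a) | a. a \<in> A}"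

definition lunit_rel :: "'a set \<Rightarrow> ((unit \<times> 'a) \<times> 'a) set" where
  "lunit_rel A = {(((), a), a) | a. a \<in> A}"

definition abelian_groupoid :: "'z set \<Rightarrow> 'l set \<Rightarrow> ('l \<Rightarrow> 'z monoid) \<Rightarrow> bool" where
  "abelian_groupoid Z L G \<longleftrightarrow>
     (\<forall>l\<in>L. comm_group (G l)) \<and>
     (\<forall>l\<in>L. \<forall>m\<in>L. l \<noteq> m \<longrightarrow> carrier (G l) \<inter> carrier (G m) = {}) \<and>
     (\<Union>l\<in>L. carrier (G l)) = Z"

definition gd_comult :: "'l set \<Rightarrow> ('l \<Rightarrow> 'z monoid) \<Rightarrow> ('z \<times> ('z \<times> 'z)) set" where
  "gd_comult L G = {(g, (g', g'')) | g g' g''. \<exists>l\<in>L.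
      g \<in> carrier (G l) \<and> g' \<in> carrier (G l) \<and> g'' \<in> carrier (G l) \<and> g' \<otimes>\<^bsub>G l\<^esub> g'' = g}"

definition gd_pair :: "'l set \<Rightarrow> ('l \<Rightarrow> 'z monoid) \<Rightarrow> (('z \<times> 'z) \<times> unit) set" where
  "gd_pair L G = {((g, h), ()) | g h. \<exists>l\<in>L.
      g \<in> carrier (G l) \<and> h \<in> carrier (G l) \<and> g \<otimes>\<^bsub>G l\<^esub> h = \<one>\<^bsub>G l\<^esub>}"

definition gd_dec :: "'l set \<Rightarrow> ('l \<Rightarrow> 'z monoid) \<Rightarrow> (('z \<times> 'z) \<times> ('z \<times> 'z)) set" where
  "gd_dec L G = {((x, x'), (y, y')) | x x' y y'. \<exists>l\<in>L.
      x \<in> carrier (G l) \<and> x' \<in> carrier (G l) \<and> y \<in> carrier (G l) \<and> y' \<in> carrier (G l) \<and>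
      x \<otimes>\<^bsub>G l\<^esub> inv\<^bsub>G l\<^esub> y = x' \<otimes>\<^bsub>G l\<^esub> inv\<^bsub>G l\<^esub> y'}"

text \<open>The dagger of the pure state rho_{G_l} = G_l x G_l, as a CPM effect Z -> 1.\<close>
definition rho_dag :: "'z monoid \<Rightarrow> (('z \<times> 'z) \<times> (unit \<times> unit)) set" where
  "rho_dag H = {((g, g'), ((), ())) | g g'. g \<in> carrier H \<and> g' \<in> carrier H}"

definition nd_measurement ::
  "'x set \<Rightarrow> 'z set \<Rightarrow> 'l set \<Rightarrow> ('l \<Rightarrow> 'z monoid) \<Rightarrow> ('x \<times> ('x \<times> 'z)) set
   \<Rightarrow> (('x \<times> 'x) \<times> (('x \<times> 'z) \<times> ('x \<times> 'z))) set \<Rightarrow> bool" where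
  "nd_measurement X Z L G P M \<longleftrightarrow>
     P \<subseteq> X \<times> (X \<times> Z) \<and>
     M = cpm_hat P O cpm_tensor (cpm_id X) (gd_dec L G) \<and>
     is_cpm X (X \<times> Z) M \<and>
     causal X (X \<times> Z) M \<and>
     \<comment> \<open>idempotence: (M x id_Z) . M = (id_X x delta^) . M, up to associativity\<close>
     M O cpm_tensor M (cpm_id Z) O cpm_hat (assoc_rel X Z Z)
       = M O cpm_tensor (cpm_id X) (cpm_hat (gd_comult L G)) \<and>
     \<comment> \<open>self-adjointness: (id_X x e^) . (M x id_Z) = (P^dagger)^ . (id_X x dec_Z), up to associator/unitor\<close>
     cpm_tensor M (cpm_id Z) O cpm_hat (assoc_rel X Z Z)
        O cpm_tensor (cpm_id X) (cpm_hat (gd_pair L G)) O cpm_hat (runit_rel X)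
       = cpm_tensor (cpm_id X) (gd_dec L G) O cpm_hat (converse P)"

definition demolition :: "'x set \<Rightarrow> 'z set
   \<Rightarrow> (('x \<times> 'x) \<times> (('x \<times> 'z) \<times> ('x \<times> 'z))) set \<Rightarrow> (('x \<times> 'x) \<times> ('z \<times> 'z)) set" where
  "demolition X Z M = M O cpm_tensor (discard X) (cpm_id Z) O cpm_hat (lunit_rel Z)"

end

theory Submission
  imports Defs "HOL-Algebra.Elementary_Groups"
begin


lemma exists_comm_group_on:
  fixes B :: "'x set" assumes "finite B" "B \<noteq> {}"
  shows "\<exists>H::'x monoid. comm_group H \<and> carrier H = B"
proof -
  define n where "n = card B"
  have n0: "n > 0" using assms by (simp add: n_def card_gt_0_iff)
  obtain h where h: "bij_betw h {0..<n} B"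
    using ex_bij_betw_nat_finite[OF assms(1)] n_def by blast
  have bn: "bij_betw nat {0..<int n} {0..<n}"
    unfolding bij_betw_def inj_on_def image_def
    by (auto intro!: bexI[where x="int _"])
  define g where "g = h \<circ> nat"
  have g: "bij_betw g {0..<int n} B" unfolding g_def using bij_betw_trans[OF bn h] .
  define H where "H = \<lparr>carrier = B, mult = \<lambda>a b. g ((inv_into {0..<int n} g a + inv_into {0..<int n} g b) mod int n), one = g 0\<rparr>"
  have cm: "carrier (integer_mod_group n) = {0..<int n}" using n0 by (simp add: carrier_integer_mod_group)
  have hom: "g \<in> hom (integer_mod_group n) H"
  proof (rule homI)
    fix x assume "x \<in> carrier (integer_mod_group n)"
    then show "g x \<in> carrier H" using g cm by (auto simp: H_def bij_betw_def)
  next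
    fix x y assume "x \<in> carrier (integer_mod_group n)" "y \<in> carrier (integer_mod_group n)"
    then show "g (x \<otimes>\<^bsub>integer_mod_group n\<^esub> y) = g x \<otimes>\<^bsub>H\<^esub> g y"
      using g cm by (simp add: H_def bij_betw_inv_into_left)
  qed
  interpret comm_group "integer_mod_group n" by simp
  have "comm_group (H\<lparr>carrier := g ` carrier (integer_mod_group n), one := g \<one>\<^bsub>integer_mod_group n\<^esub>\<rparr>)"
    by (rule hom_imp_img_comm_group[OF hom])
  moreover have "H\<lparr>carrier := g ` carrier (integer_mod_group n), one := g \<one>\<^bsub>integer_mod_group n\<^esub>\<rparr> = H"
    using g cm by (simp add: H_def bij_betw_def)
  ultimately show ?thesis by (auto simp: H_def)
qed


lemma M_mem:
  assumes M: "M = cpm_hat P O cpm_tensor (cpm_id X) (gd_dec L G)" and P: "P \<subseteq> X \<times> (X \<times> Z)"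
  shows "((x,x'),((y,w),(y',w'))) \<in> M \<longleftrightarrow> (\<exists>z z'. (x,(y,z))\<in>P \<and> (x',(y',z'))\<in>P \<and> ((z,z'),(w,w')) \<in> gd_dec L G)"
  using P unfolding M by (auto simp: cpm_hat_def cpm_tensor_def cpm_id_def relcomp_unfold) blast+

lemma demo_mem:
  assumes M: "M = cpm_hat P O cpm_tensor (cpm_id X) (gd_dec L G)" and P: "P \<subseteq> X \<times> (X \<times> Z)"
    and cov: "(\<Union>l\<in>L. carrier (G l)) = Z"
  shows "((x,x'),(w,w')) \<in> demolition X Z M \<longleftrightarrow> (\<exists>y z z'. (x,(y,z))\<in>P \<and> (x',(y,z'))\<in>P \<and> ((z,z'),(w,w')) \<in> gd_dec L G)"
proof
  assume "((x,x'),(w,w')) \<in> demolition X Z M"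
  then obtain q where q: "((x,x'),q) \<in> M" "(q,(w,w')) \<in> cpm_tensor (discard X) (cpm_id Z) O cpm_hat (lunit_rel Z)"
    unfolding demolition_def by (elim relcompEpair) blast
  obtain y a y' a' where "q = ((y,a),(y',a'))" by (cases q) auto
  with q show "\<exists>y z z'. (x,(y,z))\<in>P \<and> (x',(y,z'))\<in>P \<and> ((z,z'),(w,w')) \<in> gd_dec L G"
    by (auto simp: M_mem[OF M P] cpm_tensor_def discard_def cpm_id_def cpm_hat_def lunit_rel_def relcomp_unfold)
next
  assume "\<exists>y z z'. (x,(y,z))\<in>P \<and> (x',(y,z'))\<in>P \<and> ((z,z'),(w,w')) \<in> gd_dec L G"
  then obtain y z z' where h: "(x,(y,z))\<in>P" "(x',(y,z'))\<in>P" "((z,z'),(w,w')) \<in> gd_dec L G" by blast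
  have yX: "y \<in> X" using h P by auto
  have wZ: "w \<in> Z" "w' \<in> Z" using h(3) cov by (auto simp: gd_dec_def)
  have 1: "((x,x'),((y,w),(y,w'))) \<in> M" using h by (auto simp: M_mem[OF M P])
  have 2: "(((y,w),(y,w')),(((),w),((),w'))) \<in> cpm_tensor (discard X) (cpm_id Z)"
    using yX wZ by (auto simp: cpm_tensor_def discard_def cpm_id_def cpm_hat_def)
  have 3: "((((),w),((),w')),(w,w')) \<in> cpm_hat (lunit_rel Z)"
    using wZ by (auto simp: cpm_hat_def lunit_rel_def)
  show "((x,x'),(w,w')) \<in> demolition X Z M" unfolding demolition_def using 1 2 3 by blast
qed


locale meas =
  fixes X :: "'x set" and Z :: "'z set" and L :: "'l set" and G :: "'l \<Rightarrow> 'z monoid"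
    and P :: "('x \<times> ('x \<times> 'z)) set"
    and M :: "(('x \<times> 'x) \<times> (('x \<times> 'z) \<times> ('x \<times> 'z))) set"
  assumes ag: "abelian_groupoid Z L G"
    and nd: "nd_measurement X Z L G P M"
begin

lemma Psub: "P \<subseteq> X \<times> (X \<times> Z)" using nd by (simp add: nd_measurement_def)
lemma Mdef: "M = cpm_hat P O cpm_tensor (cpm_id X) (gd_dec L G)" using nd by (simp add: nd_measurement_def)
lemma cov: "(\<Union>l\<in>L. carrier (G l)) = Z" using ag by (simp add: abelian_groupoid_def)
lemma cg: "l \<in> L \<Longrightarrow> comm_group (G l)" using ag by (simp add: abelian_groupoid_def)
lemma disj: "l \<in> L \<Longrightarrow> m \<in> L \<Longrightarrow> a \<in> carrier (G l) \<Longrightarrow> a \<in> carrier (G m) \<Longrightarrow> l = m"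
  using ag unfolding abelian_groupoid_def by blast

lemmas Mm = M_mem[OF Mdef Psub]

lemma causal_eq: "M O discard (X \<times> Z) = discard X" using nd unfolding nd_measurement_def causal_def by blast
lemma idem_eq: "M O cpm_tensor M (cpm_id Z) O cpm_hat (assoc_rel X Z Z)
       = M O cpm_tensor (cpm_id X) (cpm_hat (gd_comult L G))" using nd unfolding nd_measurement_def by blast
lemma sa_eq: "cpm_tensor M (cpm_id Z) O cpm_hat (assoc_rel X Z Z)
        O cpm_tensor (cpm_id X) (cpm_hat (gd_pair L G)) O cpm_hat (runit_rel X)
       = cpm_tensor (cpm_id X) (gd_dec L G) O cpm_hat (converse P)" using nd unfolding nd_measurement_def by blast

definition sg :: "'z \<Rightarrow> 'z \<Rightarrow> bool" where
  "sg a b \<longleftrightarrow> (\<exists>l\<in>L. a \<in> carrier (G l) \<and> b \<in> carrier (G l))"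

lemma sg_trans: "sg a b \<Longrightarrow> sg b c \<Longrightarrow> sg a c"
  unfolding sg_def using disj by metis
lemma sg_sym: "sg a b \<Longrightarrow> sg b a" unfolding sg_def by blast

lemma inZ: "(x,(y,z)) \<in> P \<Longrightarrow> x \<in> X \<and> y \<in> X \<and> z \<in> Z" using Psub by auto

lemma Zlab: "z \<in> Z \<Longrightarrow> \<exists>l\<in>L. z \<in> carrier (G l)" using cov by auto

lemma M_diag: assumes "(x,(y,z)) \<in> P" shows "((x,x),((y,z),(y,z))) \<in> M"
proof -
  obtain l where "l\<in>L" "z \<in> carrier (G l)" using Zlab inZ[OF assms] by blast
  then have "((z,z),(z,z)) \<in> gd_dec L G" by (auto simp: gd_dec_def)
  then show ?thesis using assms by (auto simp: Mm)
qed

lemma causal_ex: assumes "x \<in> X" shows "\<exists>y z. (x,(y,z)) \<in> P"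
proof -
  have "((x,x),((),())) \<in> discard X" using assms by (simp add: discard_def)
  then have "((x,x),((),())) \<in> M O discard (X \<times> Z)" by (simp only: causal_eq)
  then obtain q where "((x,x),q) \<in> M" by blast
  moreover obtain y w y' w' where "q = ((y,w),(y',w'))" by (cases q) auto
  ultimately show ?thesis by (auto simp: Mm)
qed

lemma idem_facts: assumes "(x,(y,z)) \<in> P" "(y,(y2,c)) \<in> P"
  shows "sg c z \<and> (\<exists>e. (x,(y2,e)) \<in> P)"
proof -
  have 1: "((x,x),((y,z),(y,z))) \<in> M" using M_diag[OF assms(1)] .
  have 2: "(((y,z),(y,z)),(((y2,c),z),((y2,c),z))) \<in> cpm_tensor M (cpm_id Z)"
    using M_diag[OF assms(2)] inZ[OF assms(1)] by (auto simp: cpm_tensor_def cpm_id_def cpm_hat_def)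
  have 3: "((((y2,c),z),((y2,c),z)),((y2,(c,z)),(y2,(c,z)))) \<in> cpm_hat (assoc_rel X Z Z)"
    using inZ[OF assms(1)] inZ[OF assms(2)] by (auto simp: cpm_hat_def assoc_rel_def)
  have "((x,x),((y2,(c,z)),(y2,(c,z)))) \<in> M O cpm_tensor M (cpm_id Z) O cpm_hat (assoc_rel X Z Z)"
    using 1 2 3 by blast
  then have "((x,x),((y2,(c,z)),(y2,(c,z)))) \<in> M O cpm_tensor (cpm_id X) (cpm_hat (gd_comult L G))"
    by (simp only: idem_eq)
  then obtain q where q: "((x,x),q) \<in> M" "(q,((y2,(c,z)),(y2,(c,z)))) \<in> cpm_tensor (cpm_id X) (cpm_hat (gd_comult L G))"
    by (elim relcompEpair) blast
  obtain a u a' u' where qq: "q = ((a,u),(a',u'))" by (cases q) auto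
  from q(2) have "a = y2" "sg c z" unfolding qq
    by (auto simp: cpm_tensor_def cpm_id_def cpm_hat_def gd_comult_def sg_def)
  with q(1) show ?thesis unfolding qq by (auto simp: Mm)
qed

lemma sa_fact: assumes "(x,(y,z)) \<in> P" shows "\<exists>v. (y,(x,v)) \<in> P \<and> sg v z"
proof -
  obtain l where l: "l\<in>L" "z \<in> carrier (G l)" using Zlab inZ[OF assms] by blast
  interpret comm_group "G l" using cg l(1) .
  define u where "u = inv\<^bsub>G l\<^esub> z"
  have u: "u \<in> carrier (G l)" "z \<otimes>\<^bsub>G l\<^esub> u = \<one>\<^bsub>G l\<^esub>" using l by (auto simp: u_def)
  have uZ: "u \<in> Z" using u l cov by blast
  have xyz: "x \<in> X" "y \<in> X" "z \<in> Z" using inZ[OF assms] by auto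
  have 1: "(((x,u),(x,u)),(((y,z),u),((y,z),u))) \<in> cpm_tensor M (cpm_id Z)"
    using M_diag[OF assms] uZ by (auto simp: cpm_tensor_def cpm_id_def cpm_hat_def)
  have 2: "((((y,z),u),((y,z),u)),((y,(z,u)),(y,(z,u)))) \<in> cpm_hat (assoc_rel X Z Z)"
    using xyz uZ by (auto simp: cpm_hat_def assoc_rel_def)
  have 3: "(((y,(z,u)),(y,(z,u))),((y,()),(y,()))) \<in> cpm_tensor (cpm_id X) (cpm_hat (gd_pair L G))"
    using xyz u l by (auto simp: cpm_tensor_def cpm_id_def cpm_hat_def gd_pair_def)
  have 4: "(((y,()),(y,())),(y,y)) \<in> cpm_hat (runit_rel X)"
    using xyz by (auto simp: cpm_hat_def runit_rel_def)
  have "(((x,u),(x,u)),(y,y)) \<in> cpm_tensor M (cpm_id Z) O cpm_hat (assoc_rel X Z Z)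
        O cpm_tensor (cpm_id X) (cpm_hat (gd_pair L G)) O cpm_hat (runit_rel X)"
    using 1 2 3 4 by blast
  then have "(((x,u),(x,u)),(y,y)) \<in> cpm_tensor (cpm_id X) (gd_dec L G) O cpm_hat (converse P)"
    by (simp only: sa_eq)
  then obtain q where q: "(((x,u),(x,u)),q) \<in> cpm_tensor (cpm_id X) (gd_dec L G)" "(q,(y,y)) \<in> cpm_hat (converse P)"
    by (elim relcompEpair) blast
  obtain a v a' v' where qq: "q = ((a,v),(a',v'))" by (cases q) auto
  from q(1) have "a = x" "sg v u" unfolding qq
    by (auto simp: cpm_tensor_def cpm_id_def cpm_hat_def gd_dec_def sg_def)
  moreover have "sg u z" using u l by (auto simp: sg_def)
  moreover from q(2) have "(y,(a,v)) \<in> P" unfolding qq by (auto simp: cpm_hat_def)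
  ultimately show ?thesis using sg_trans by blast
qed

end

context meas begin

definition E :: "'x \<Rightarrow> 'x \<Rightarrow> bool" where "E x y \<longleftrightarrow> (\<exists>z. (x,(y,z)) \<in> P)"
definition lbl :: "'x \<Rightarrow> 'l \<Rightarrow> bool" where
  "lbl x l \<longleftrightarrow> l \<in> L \<and> (\<exists>y z. (x,(y,z)) \<in> P \<and> z \<in> carrier (G l))"

lemma sg_in: "sg a b \<Longrightarrow> b \<in> carrier (G l) \<Longrightarrow> l \<in> L \<Longrightarrow> a \<in> carrier (G l)"
  unfolding sg_def using disj by metis

lemma E_X: "E x y \<Longrightarrow> x \<in> X \<and> y \<in> X" unfolding E_def using inZ by blast
lemma E_sym: "E x y \<Longrightarrow> E y x" unfolding E_def using sa_fact by blast
lemma E_trans: "E x y \<Longrightarrow> E y w \<Longrightarrow> E x w" unfolding E_def using idem_facts by blast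
lemma E_refl: "x \<in> X \<Longrightarrow> E x x"
  using causal_ex E_sym E_trans unfolding E_def by blast

lemma lab_uniq: "(x,(y,z)) \<in> P \<Longrightarrow> (x,(y2,c)) \<in> P \<Longrightarrow> sg c z"
  using sa_fact idem_facts sg_trans by blast

lemma lbl_ex: "x \<in> X \<Longrightarrow> \<exists>l. lbl x l"
  using causal_ex inZ Zlab unfolding lbl_def by metis

lemma lbl_uniq: "lbl x l \<Longrightarrow> lbl x m \<Longrightarrow> l = m"
  unfolding lbl_def using lab_uniq sg_in disj by metis

lemma lbl_E: assumes "lbl x l" "E x x'" shows "lbl x' l"
proof -
  obtain y z where yz: "(x,(y,z)) \<in> P" "z \<in> carrier (G l)" "l \<in> L" using assms(1) lbl_def by blast
  obtain e where e: "(x,(x',e)) \<in> P" using assms(2) E_def by blast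
  obtain y2 c where c: "(x',(y2,c)) \<in> P" using causal_ex E_X[OF assms(2)] by blast
  have "sg c z" using idem_facts[OF e c] lab_uniq[OF yz(1) e] sg_trans by blast
  then show ?thesis using c yz sg_in unfolding lbl_def by blast
qed

lemma R_char: assumes "l \<in> L"
  shows "(\<exists>y z z'. (x,(y,z)) \<in> P \<and> (x',(y,z')) \<in> P \<and> z \<in> carrier (G l) \<and> z' \<in> carrier (G l))
     \<longleftrightarrow> E x x' \<and> lbl x l"
proof
  assume "\<exists>y z z'. (x,(y,z)) \<in> P \<and> (x',(y,z')) \<in> P \<and> z \<in> carrier (G l) \<and> z' \<in> carrier (G l)"
  then obtain y z z' where h: "(x,(y,z)) \<in> P" "(x',(y,z')) \<in> P" "z \<in> carrier (G l)" by blast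
  have "E x x'" using h E_sym E_trans unfolding E_def by blast
  moreover have "lbl x l" using h assms unfolding lbl_def by blast
  ultimately show "E x x' \<and> lbl x l" by blast
next
  assume h: "E x x' \<and> lbl x l"
  obtain e where e: "(x,(x',e)) \<in> P" using h E_def by blast
  obtain y0 z0 where z0: "(x,(y0,z0)) \<in> P" "z0 \<in> carrier (G l)" using h lbl_def by blast
  have eG: "e \<in> carrier (G l)" using lab_uniq[OF z0(1) e] z0(2) assms sg_in by blast
  obtain c where c: "(x',(x',c)) \<in> P" using E_refl E_X h unfolding E_def by blast
  have "c \<in> carrier (G l)" using idem_facts[OF e c] eG assms sg_in by blast
  then show "\<exists>y z z'. (x,(y,z)) \<in> P \<and> (x',(y,z')) \<in> P \<and> z \<in> carrier (G l) \<and> z' \<in> carrier (G l)"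
    using e c eG by blast
qed

lemma LHS_char: assumes "l \<in> L"
  shows "((x,x'),q) \<in> demolition X Z M O rho_dag (G l) \<longleftrightarrow> q = ((),()) \<and> E x x' \<and> lbl x l"
proof -
  have "((x,x'),q) \<in> demolition X Z M O rho_dag (G l) \<longleftrightarrow>
     q = ((),()) \<and> (\<exists>y z z'. (x,(y,z)) \<in> P \<and> (x',(y,z')) \<in> P \<and> z \<in> carrier (G l) \<and> z' \<in> carrier (G l))"
  proof
    assume "((x,x'),q) \<in> demolition X Z M O rho_dag (G l)"
    then obtain w w' where ww: "((x,x'),(w,w')) \<in> demolition X Z M" "((w,w'),q) \<in> rho_dag (G l)"
      by (elim relcompEpair) (metis surj_pair)
    then obtain y z z' where h: "(x,(y,z))\<in>P" "(x',(y,z'))\<in>P" "((z,z'),(w,w')) \<in> gd_dec L G"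
      using demo_mem[OF Mdef Psub cov] by blast
    from h(3) obtain m where m: "m \<in> L" "z \<in> carrier (G m)" "z' \<in> carrier (G m)" "w \<in> carrier (G m)"
      unfolding gd_dec_def by blast
    have wl: "w \<in> carrier (G l)" "q = ((),())" using ww(2) by (auto simp: rho_dag_def)
    have "m = l" using disj[OF m(1) assms m(4) wl(1)] .
    then show "q = ((),()) \<and> (\<exists>y z z'. (x,(y,z)) \<in> P \<and> (x',(y,z')) \<in> P \<and> z \<in> carrier (G l) \<and> z' \<in> carrier (G l))"
      using h m wl by blast
  next
    assume "q = ((),()) \<and> (\<exists>y z z'. (x,(y,z)) \<in> P \<and> (x',(y,z')) \<in> P \<and> z \<in> carrier (G l) \<and> z' \<in> carrier (G l))"
    then obtain y z z' where h: "q = ((),())" "(x,(y,z))\<in>P" "(x',(y,z'))\<in>P" "z \<in> carrier (G l)" "z' \<in> carrier (G l)"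
      by blast
    interpret comm_group "G l" using cg assms .
    have "((z,z'),(z,z')) \<in> gd_dec L G" using h assms unfolding gd_dec_def by auto
    then have "((x,x'),(z,z')) \<in> demolition X Z M" using demo_mem[OF Mdef Psub cov] h by blast
    moreover have "((z,z'),q) \<in> rho_dag (G l)" using h by (auto simp: rho_dag_def)
    ultimately show "((x,x'),q) \<in> demolition X Z M O rho_dag (G l)" by blast
  qed
  then show ?thesis using R_char[OF assms] by blast
qed

end


lemma rhs_char:
  assumes ag: "abelian_groupoid X \<Gamma> H" and g: "\<gamma> \<in> \<Gamma>"
  shows "((x,x'),q) \<in> gd_dec \<Gamma> H O rho_dag (H \<gamma>) \<longleftrightarrow> q = ((),()) \<and> x \<in> carrier (H \<gamma>) \<and> x' \<in> carrier (H \<gamma>)"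
proof
  assume "((x,x'),q) \<in> gd_dec \<Gamma> H O rho_dag (H \<gamma>)"
  then obtain y y' where yy: "((x,x'),(y,y')) \<in> gd_dec \<Gamma> H" "((y,y'),q) \<in> rho_dag (H \<gamma>)"
    by (elim relcompEpair) (metis surj_pair)
  from yy(1) obtain m where m: "m \<in> \<Gamma>" "x \<in> carrier (H m)" "x' \<in> carrier (H m)" "y \<in> carrier (H m)"
    unfolding gd_dec_def by blast
  have y: "y \<in> carrier (H \<gamma>)" "q = ((),())" using yy(2) by (auto simp: rho_dag_def)
  have "m = \<gamma>" using ag m g y unfolding abelian_groupoid_def by blast
  then show "q = ((),()) \<and> x \<in> carrier (H \<gamma>) \<and> x' \<in> carrier (H \<gamma>)" using m y by blast
next
  assume h: "q = ((),()) \<and> x \<in> carrier (H \<gamma>) \<and> x' \<in> carrier (H \<gamma>)"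
  interpret comm_group "H \<gamma>" using ag g unfolding abelian_groupoid_def by blast
  have "((x,x'),(x,x')) \<in> gd_dec \<Gamma> H" using h g unfolding gd_dec_def by auto
  moreover have "((x,x'),q) \<in> rho_dag (H \<gamma>)" using h by (auto simp: rho_dag_def)
  ultimately show "((x,x'),q) \<in> gd_dec \<Gamma> H O rho_dag (H \<gamma>)" by blast
qed

context meas begin

lemma main:
  assumes fin: "finite X"
  shows "\<exists>(\<Gamma> :: nat set) (H :: nat \<Rightarrow> 'x monoid) (f :: nat \<Rightarrow> 'l).
           abelian_groupoid X \<Gamma> H \<and> (\<forall>\<gamma>\<in>\<Gamma>. f \<gamma> \<in> L) \<and>
           (\<forall>l\<in>L. demolition X Z M O rho_dag (G l)
                   = (\<Union>\<gamma>\<in>{\<gamma>\<in>\<Gamma>. f \<gamma> = l}. gd_dec \<Gamma> H O rho_dag (H \<gamma>)))"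
proof -
  define r where "r = {(x,y). E x y}"
  have eq: "equiv X r" unfolding r_def equiv_def refl_on_def sym_def trans_def
    using E_refl E_X E_sym E_trans by blast
  define Q where "Q = X // r"
  have finQ: "finite Q" unfolding Q_def using fin eq by (simp add: finite_quotient equiv_type)
  obtain h where h: "bij_betw h {0..<card Q} Q" using ex_bij_betw_nat_finite[OF finQ] by blast
  define \<Gamma> where "\<Gamma> = {0..<card Q}"
  define H where "H = (\<lambda>\<gamma>. SOME Hg :: 'x monoid. comm_group Hg \<and> carrier Hg = h \<gamma>)"
  define rep where "rep = (\<lambda>\<gamma>. SOME x. x \<in> h \<gamma>)"
  define f where "f = (\<lambda>\<gamma>. SOME l. lbl (rep \<gamma>) l)"
  have hQ: "\<gamma> \<in> \<Gamma> \<Longrightarrow> h \<gamma> \<in> Q" for \<gamma> using h unfolding \<Gamma>_def bij_betw_def by blast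
  have Hg: "comm_group (H \<gamma>) \<and> carrier (H \<gamma>) = h \<gamma>" if "\<gamma> \<in> \<Gamma>" for \<gamma>
  proof -
    have "h \<gamma> \<noteq> {}" using in_quotient_imp_non_empty[OF eq] hQ[OF that] unfolding Q_def by blast
    moreover have "finite (h \<gamma>)" using hQ[OF that] fin unfolding Q_def
      by (meson eq finite_subset in_quotient_imp_subset)
    ultimately show ?thesis unfolding H_def using exists_comm_group_on by (metis (mono_tags, lifting) someI_ex)
  qed
  have rep: "rep \<gamma> \<in> h \<gamma>" if "\<gamma> \<in> \<Gamma>" for \<gamma>
    using in_quotient_imp_non_empty[OF eq] hQ[OF that] unfolding rep_def Q_def by (simp add: some_in_eq)
  have repX: "rep \<gamma> \<in> X" if "\<gamma> \<in> \<Gamma>" for \<gamma>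
    using rep[OF that] hQ[OF that] eq unfolding Q_def by (meson in_quotient_imp_subset subsetD)
  have flbl: "lbl (rep \<gamma>) (f \<gamma>)" if "\<gamma> \<in> \<Gamma>" for \<gamma>
    unfolding f_def using lbl_ex[OF repX[OF that]] by (rule someI_ex)
  have classE: "E x y" if "C \<in> Q" "x \<in> C" "y \<in> C" for C x y
    using that eq unfolding Q_def r_def by (metis case_prodD mem_Collect_eq quotient_eq_iff)
  have agH: "abelian_groupoid X \<Gamma> H"
    unfolding abelian_groupoid_def
  proof (intro conjI ballI impI)
    fix l assume "l \<in> \<Gamma>" then show "comm_group (H l)" using Hg by blast
  next
    fix l m assume lm: "l \<in> \<Gamma>" "m \<in> \<Gamma>" "l \<noteq> m"
    then have "h l \<noteq> h m" using h unfolding \<Gamma>_def bij_betw_def inj_on_def by blast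
    then show "carrier (H l) \<inter> carrier (H m) = {}"
      using Hg lm hQ eq unfolding Q_def by (metis quotient_disj)
  next
    have "(\<Union>l\<in>\<Gamma>. carrier (H l)) = (\<Union>l\<in>\<Gamma>. h l)" using Hg by simp
    also have "\<dots> = \<Union>Q" using h unfolding \<Gamma>_def bij_betw_def by blast
    also have "\<dots> = X" unfolding Q_def using eq by (simp add: Union_quotient)
    finally show "(\<Union>l\<in>\<Gamma>. carrier (H l)) = X" .
  qed
  have fL: "\<forall>\<gamma>\<in>\<Gamma>. f \<gamma> \<in> L" using flbl unfolding lbl_def by blast
  have eqs: "demolition X Z M O rho_dag (G l)
                   = (\<Union>\<gamma>\<in>{\<gamma>\<in>\<Gamma>. f \<gamma> = l}. gd_dec \<Gamma> H O rho_dag (H \<gamma>))" if l: "l \<in> L" for l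
  proof (rule Set.set_eqI)
    fix p :: "('x \<times> 'x) \<times> (unit \<times> unit)"
    obtain x x' q where p: "p = ((x,x'),q)" by (metis surj_pair)
    have "((x,x'),q) \<in> demolition X Z M O rho_dag (G l) \<longleftrightarrow>
          ((x,x'),q) \<in> (\<Union>\<gamma>\<in>{\<gamma>\<in>\<Gamma>. f \<gamma> = l}. gd_dec \<Gamma> H O rho_dag (H \<gamma>))"
    proof
      assume "((x,x'),q) \<in> demolition X Z M O rho_dag (G l)"
      then have a: "q = ((),())" "E x x'" "lbl x l" using LHS_char[OF l] by blast+
      have xX: "x \<in> X" using a E_X by blast
      define C where "C = r``{x}"
      have CQ: "C \<in> Q" unfolding C_def Q_def using xX by (rule quotientI)
      have xC: "x \<in> C" "x' \<in> C" unfolding C_def r_def using a E_refl xX by auto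
      have "C \<in> h ` \<Gamma>" using h CQ unfolding \<Gamma>_def bij_betw_def by simp
      then obtain \<gamma> where g: "\<gamma> \<in> \<Gamma>" "h \<gamma> = C" by (metis imageE)
      have "E x (rep \<gamma>)" using classE[OF CQ xC(1), of "rep \<gamma>"] rep[OF g(1)] g(2) by simp
      then have "lbl (rep \<gamma>) l" using lbl_E a by blast
      then have "f \<gamma> = l" using flbl[OF g(1)] lbl_uniq by blast
      moreover have "((x,x'),q) \<in> gd_dec \<Gamma> H O rho_dag (H \<gamma>)"
        using rhs_char[OF agH g(1)] a Hg[OF g(1)] g xC by blast
      ultimately show "((x,x'),q) \<in> (\<Union>\<gamma>\<in>{\<gamma>\<in>\<Gamma>. f \<gamma> = l}. gd_dec \<Gamma> H O rho_dag (H \<gamma>))"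
        using g by blast
    next
      assume "((x,x'),q) \<in> (\<Union>\<gamma>\<in>{\<gamma>\<in>\<Gamma>. f \<gamma> = l}. gd_dec \<Gamma> H O rho_dag (H \<gamma>))"
      then obtain \<gamma> where g: "\<gamma> \<in> \<Gamma>" "f \<gamma> = l" "((x,x'),q) \<in> gd_dec \<Gamma> H O rho_dag (H \<gamma>)" by blast
      then have a: "q = ((),())" "x \<in> h \<gamma>" "x' \<in> h \<gamma>" using rhs_char[OF agH g(1)] Hg[OF g(1)] by blast+
      have "E x x'" using classE[OF hQ[OF g(1)] a(2,3)] .
      moreover have "lbl x l" using flbl[OF g(1)] g(2) classE[OF hQ[OF g(1)] rep[OF g(1)] a(2)] lbl_E by blast
      ultimately show "((x,x'),q) \<in> demolition X Z M O rho_dag (G l)" using LHS_char[OF l] a by blast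
    qed
    then show "p \<in> demolition X Z M O rho_dag (G l) \<longleftrightarrow> p \<in> (\<Union>\<gamma>\<in>{\<gamma>\<in>\<Gamma>. f \<gamma> = l}. gd_dec \<Gamma> H O rho_dag (H \<gamma>))"
      using p by simp
  qed
  show ?thesis using agH fL eqs by blast
qed

end

theorem mainTheorem5:
  fixes X :: "'x set" and Z :: "'z set" and L :: "'l set" and G :: "'l \<Rightarrow> 'z monoid"
    and P :: "('x \<times> ('x \<times> 'z)) set"
    and M :: "(('x \<times> 'x) \<times> (('x \<times> 'z) \<times> ('x \<times> 'z))) set"
  assumes "finite X" and "finite Z"
    and "abelian_groupoid Z L G"
    and "nd_measurement X Z L G P M"
  shows "\<exists>(\<Gamma> :: nat set) (H :: nat \<Rightarrow> 'x monoid) (f :: nat \<Rightarrow> 'l).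
           abelian_groupoid X \<Gamma> H \<and> (\<forall>\<gamma>\<in>\<Gamma>. f \<gamma> \<in> L) \<and>
           (\<forall>l\<in>L. demolition X Z M O rho_dag (G l)
                   = (\<Union>\<gamma>\<in>{\<gamma>\<in>\<Gamma>. f \<gamma> = l}. gd_dec \<Gamma> H O rho_dag (H \<gamma>)))"
proof -
  interpret meas X Z L G P M using assms(3,4) by unfold_locales
  show ?thesis by (rule main[OF assms(1)])
qed

end
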